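(* For every $n \in \mathbb N$ and $q \in \{0,1,\dots,\lfloor n/2\rfloor\}$, $$\sum_{\mathbf m \in S_{n,q,1}} \pi_{\mathbf m} = \frac{1}{(n-2q)!\, q!\, 2^q}.$$
   Context: $S_{n,q,1} = \{\mathbf m=(m_1,\dots,m_{n-q}) \in \{0,1\}^{n-q} : m_1+\cdots+m_{n-q} = q\}$, and for such $\mathbf m$, $\pi_{\mathbf m} = \prod_{i=1}^{n-q} [m_i+m_{i+1}+\cdots+m_{n-q} + (n-q-i+1)]^{-1}$. *)

theory Defs
  imports "HOL-Analysis.Analysis"
begin

text \<open>Vectors m = (m_1,...,m_{n-q}) in {0,1}^{n-q} are represented as functions
  nat => nat supported on {1..n-q} (value 0 outside), so that the set is finite.\<close>

definition S1 :: "nat \<Rightarrow> nat \<Rightarrow> (nat \<Rightarrow> nat) set" where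
  "S1 n q = {m. (\<forall>i\<in>{1..n-q}. m i \<in> {0,1}) \<and> (\<forall>i. i \<notin> {1..n-q} \<longrightarrow> m i = 0)
               \<and> (\<Sum>i=1..n-q. m i) = q}"

definition pim :: "nat \<Rightarrow> nat \<Rightarrow> (nat \<Rightarrow> nat) \<Rightarrow> real" where
  "pim n q m = (\<Prod>i=1..n-q. 1 / (real (\<Sum>j=i..n-q. m j) + real (n - q - i + 1)))"

end

theory Submission
  imports Defs
begin

fun g :: "nat list \<Rightarrow> real" where
  "g [] = 1"
| "g (x#xs) = g xs / (real (sum_list (x#xs)) + real (length (x#xs)))"

definition L :: "nat \<Rightarrow> nat \<Rightarrow> nat list set" where
  "L N k = {xs. length xs = N \<and> set xs \<subseteq> {0,1} \<and> sum_list xs = k}"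

lemma L_finite: "finite (L N k)"
proof -
  have "L N k \<subseteq> {xs. set xs \<subseteq> {0,1} \<and> length xs = N}" by (auto simp: L_def)
  moreover have "finite {xs. set xs \<subseteq> {0::nat,1} \<and> length xs = N}"
    by (rule finite_lists_length_eq) simp
  ultimately show ?thesis by (rule finite_subset)
qed

lemma L_0: "L 0 k = (if k = 0 then {[]} else {})"
  by (auto simp: L_def)

lemma L_Suc0: "L (Suc N) 0 = Cons 0 ` L N 0"
proof -
  have "xs \<in> Cons 0 ` L N 0" if "xs \<in> L (Suc N) 0" for xs
    using that by (cases xs) (auto simp: L_def)
  then show ?thesis by (auto simp: L_def)
qed

lemma L_SucSuc: "L (Suc N) (Suc k) = Cons 0 ` L N (Suc k) \<union> Cons 1 ` L N k"
proof -
  have "xs \<in> Cons 0 ` L N (Suc k) \<union> Cons 1 ` L N k" if "xs \<in> L (Suc N) (Suc k)" for xs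
  proof (cases xs)
    case Nil then show ?thesis using that by (auto simp: L_def)
  next
    case (Cons y ys)
    then have "y = 0 \<or> y = 1" using that by (auto simp: L_def)
    then show ?thesis using that Cons by (auto simp: L_def)
  qed
  then show ?thesis by (auto simp: L_def)
qed

lemma sum_img:
  "sum g (Cons c ` L N k) = (\<Sum>xs\<in>L N k. g xs) / (real (c + k) + real (Suc N))"
proof -
  have "sum g (Cons c ` L N k) = sum (g \<circ> Cons c) (L N k)"
    by (rule sum.reindex) (auto simp: inj_on_def)
  also have "\<dots> = (\<Sum>xs\<in>L N k. g xs / (real (c + k) + real (Suc N)))"
    by (rule sum.cong) (auto simp: L_def)
  finally show ?thesis by (simp add: sum_divide_distrib)
qed

lemma key: "(A::real) > 0 \<Longrightarrow> a > 0 \<Longrightarrow> b > 0 \<Longrightarrow> D = a + b \<Longrightarrow>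
   1/(A*a)/D + 1/(A*b)/D = 1/(A*a*b)"
proof -
  assume h: "(A::real) > 0" "a > 0" "b > 0" "D = a + b"
  have D: "D > 0" using h by simp
  have "1/(A*a)/D + 1/(A*b)/D = (b + a)/(A*a*b*D)" using h(1-3) D by (simp add: field_simps)
  also have "\<dots> = 1/(A*a*b)" using h D by (simp add: add.commute)
  finally show ?thesis .
qed

lemma arith:
  fixes N k :: nat
  assumes "Suc k \<le> Suc N"
  shows "((if Suc k \<le> N then 1 / (fact (N - Suc k) * fact (Suc k) * 2 ^ Suc k) else 0)
          / (real (0 + Suc k) + real (Suc N))
        + 1 / (fact (N - k) * fact k * 2 ^ k) / (real (1 + k) + real (Suc N)) :: real)
       = 1 / (fact (Suc N - Suc k) * fact (Suc k) * 2 ^ Suc k)"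
proof (cases "Suc k \<le> N")
  case True
  then obtain d where d: "N = Suc k + d" using le_Suc_ex by blast
  have e1: "N - Suc k = d" "N - k = Suc d" "Suc N - Suc k = Suc d" using d by auto
  define A :: real where "A = fact d * fact k * 2^k"
  have A: "A > 0" unfolding A_def by auto
  have t1: "fact d * fact (Suc k) * 2 ^ Suc k = A * (2 * (real k + 1))"
    unfolding A_def by (simp add: fact_Suc algebra_simps)
  have t2: "fact (Suc d) * fact k * 2 ^ k = A * (real d + 1)"
    unfolding A_def by (simp add: fact_Suc algebra_simps)
  have t3: "fact (Suc d) * fact (Suc k) * 2 ^ Suc k = A * (2 * (real k + 1)) * (real d + 1)"
    unfolding A_def by (simp add: fact_Suc algebra_simps)
  have D1: "real (0 + Suc k) + real (Suc N) = (2 * (real k + 1)) + (real d + 1)" using d by simp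
  have D2: "real (1 + k) + real (Suc N) = (2 * (real k + 1)) + (real d + 1)" using d by simp
  show ?thesis using True unfolding e1 t1 t2 t3 D1 D2
    using key[OF A, of "2 * (real k + 1)" "real d + 1"] by simp
next
  case False
  then have "N = k" using assms by auto
  then show ?thesis by (simp add: field_simps fact_Suc)
qed

lemma sumL: "(\<Sum>xs\<in>L N k. g xs) = (if k \<le> N then 1 / (fact (N - k) * fact k * 2 ^ k) else 0)"
proof (induction N arbitrary: k)
  case 0
  then show ?case by (simp add: L_0)
next
  case (Suc N)
  show ?case
  proof (cases k)
    case 0
    have "sum g (L N 0) = 1 / fact N" using Suc.IH[of 0] by simp
    have f: "fact (Suc N) = (real N + 1) * fact N" by (simp add: fact_Suc)
    have "(\<Sum>xs\<in>L (Suc N) 0. g xs) = (1 / fact N) / (real N + 1)"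
      unfolding L_Suc0 sum_img \<open>sum g (L N 0) = 1 / fact N\<close> by simp
    then show ?thesis using 0 unfolding f by simp
  next
    case (Suc k')
    have disj: "Cons 0 ` L N (Suc k') \<inter> Cons 1 ` L N k' = {}" by auto
    have "(\<Sum>xs\<in>L (Suc N) k. g xs) = sum g (Cons 0 ` L N (Suc k')) + sum g (Cons 1 ` L N k')"
      unfolding Suc L_SucSuc by (rule sum.union_disjoint) (auto simp: L_finite)
    also have "\<dots> = (if Suc k' \<le> N then 1 / (fact (N - Suc k') * fact (Suc k') * 2 ^ Suc k') else 0)
          / (real (0 + Suc k') + real (Suc N))
        + (if k' \<le> N then 1 / (fact (N - k') * fact k' * 2 ^ k') else 0) / (real (1 + k') + real (Suc N))"
      unfolding sum_img Suc.IH by simp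
    finally show ?thesis using arith[of k' N] Suc by auto
  qed
qed

lemma g_map: "g (map m [a..<b]) = (\<Prod>i\<in>{a..<b}. 1 / (real (\<Sum>j\<in>{i..<b}. m j) + real (b - i)))"
proof (induction "b - a" arbitrary: a)
  case 0
  then show ?case by simp
next
  case (Suc d)
  then have ab: "a < b" by auto
  have u: "[a..<b] = a # [Suc a..<b]" using ab upt_conv_Cons by blast
  have sl: "sum_list (map m [a..<b]) = sum m {a..<b}"
    by (simp add: interv_sum_list_conv_sum_set_nat)
  have IH: "g (map m [Suc a..<b]) = (\<Prod>i\<in>{Suc a..<b}. 1 / (real (\<Sum>j\<in>{i..<b}. m j) + real (b - i)))"
    using Suc(1)[of "Suc a"] Suc(2) by simp
  have "g (map m [a..<b]) = g (map m [Suc a..<b]) / (real (sum_list (map m [a..<b])) + real (length [a..<b]))"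
    unfolding u by simp
  also have "\<dots> = (\<Prod>i\<in>{Suc a..<b}. 1 / (real (\<Sum>j\<in>{i..<b}. m j) + real (b - i))) *
      (1 / (real (\<Sum>j\<in>{a..<b}. m j) + real (b - a)))"
    unfolding IH sl by simp
  also have "\<dots> = (\<Prod>i\<in>{a..<b}. 1 / (real (\<Sum>j\<in>{i..<b}. m j) + real (b - i)))"
    using prod.atLeast_Suc_lessThan[OF ab, of "\<lambda>i. 1 / (real (\<Sum>j\<in>{i..<b}. m j) + real (b - i))"]
    by (simp add: mult.commute)
  finally show ?case .
qed

lemma sum1N: "sum (m::nat\<Rightarrow>nat) {1..N} = sum_list (map (\<lambda>i. m (Suc i)) [0..<N])"
  by (simp add: interv_sum_list_conv_sum_set_nat sum.atLeast1_atMost_eq atLeast0LessThan)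

theorem lemma3:
  fixes n q :: nat
  assumes "q \<le> n div 2"
  shows "(\<Sum>m\<in>S1 n q. pim n q m) = 1 / (fact (n - 2*q) * fact q * 2 ^ q)"
proof -
  define N where "N = n - q"
  have qN: "q \<le> N" "N - q = n - 2*q" using assms unfolding N_def by auto
  define h where "h = (\<lambda>m::nat\<Rightarrow>nat. map (\<lambda>i. m (Suc i)) [0..<N])"
  define f' where "f' = (\<lambda>xs i. if i \<in> {1..N} then xs ! (i - 1) else (0::nat))"
  have hnth: "h m ! i = m (Suc i)" if "i < N" for m i using that by (simp add: h_def)
  have hlen: "length (h m) = N" for m by (simp add: h_def)
  have pim_eq: "pim n q m = g (h m)" for m
  proof -
    have us: "[1..<Suc N] = map Suc [0..<N]" by (simp only: map_Suc_upt One_nat_def)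
    have hm: "h m = map m [1..<Suc N]" unfolding h_def us map_map comp_def ..
    have "g (h m) = (\<Prod>i\<in>{1..<Suc N}. 1 / (real (\<Sum>j\<in>{i..<Suc N}. m j) + real (Suc N - i)))"
      unfolding hm by (rule g_map)
    also have "\<dots> = pim n q m" unfolding pim_def N_def[symmetric]
      by (rule prod.cong) (auto simp: atLeastLessThanSuc_atLeastAtMost Suc_diff_le)
    finally show ?thesis by simp
  qed
  have bij: "bij_betw h (S1 n q) (L N q)"
  proof (rule bij_betw_byWitness[where f' = f'])
    show "\<forall>m\<in>S1 n q. f' (h m) = m"
    proof
      fix m assume m: "m \<in> S1 n q"
      show "f' (h m) = m"
      proof
        fix i show "f' (h m) i = m i"
        proof (cases "i \<in> {1..N}")
          case True
          then have "i - 1 < N" "Suc (i - 1) = i" by auto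
          then show ?thesis using True by (simp add: f'_def hnth)
        next
          case False
          then show ?thesis using m unfolding f'_def S1_def N_def[symmetric] by auto
        qed
      qed
    qed
    show "\<forall>xs\<in>L N q. h (f' xs) = xs"
    proof
      fix xs assume xs: "xs \<in> L N q"
      then have len: "length xs = N" by (simp add: L_def)
      show "h (f' xs) = xs"
      proof (rule nth_equalityI)
        show "length (h (f' xs)) = length xs" using len hlen by simp
        fix i assume "i < length (h (f' xs))"
        then have "i < N" using hlen by simp
        then show "h (f' xs) ! i = xs ! i" by (simp add: hnth f'_def)
      qed
    qed
    show "h ` S1 n q \<subseteq> L N q"
    proof
      fix ys assume "ys \<in> h ` S1 n q"
      then obtain m where m: "m \<in> S1 n q" "ys = h m" by auto
      have "set (h m) \<subseteq> {0,1}"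
      proof
        fix x assume "x \<in> set (h m)"
        then obtain j where j: "j < N" "x = m (Suc j)" by (auto simp: h_def)
        then have "Suc j \<in> {1..N}" by auto
        moreover have "\<forall>i\<in>{1..N}. m i \<in> {0,1}" using m(1) unfolding S1_def N_def[symmetric] by blast
        ultimately have "m (Suc j) \<in> {0,1}" by (rule_tac bspec)
        then show "x \<in> {0,1}" using j(2) by simp
      qed
      moreover have "sum_list (h m) = q"
      proof -
        have "sum_list (h m) = sum m {1..N}" unfolding h_def sum1N ..
        also have "\<dots> = q" using m(1) unfolding S1_def N_def[symmetric] by blast
        finally show ?thesis .
      qed
      ultimately show "ys \<in> L N q" using m(2) hlen by (simp add: L_def)
    qed
    show "f' ` L N q \<subseteq> S1 n q"
    proof
      fix m assume "m \<in> f' ` L N q"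
      then obtain xs where xs: "xs \<in> L N q" "m = f' xs" by auto
      have hx: "h m = xs"
      proof (rule nth_equalityI)
        show "length (h m) = length xs" using xs hlen by (simp add: L_def)
        fix i assume "i < length (h m)"
        then have "i < N" using hlen by simp
        then show "h m ! i = xs ! i" using xs(2) by (simp add: hnth f'_def)
      qed
      have "sum m {1..N} = q" using sum1N[of m N] hx xs(1)
        by (simp add: h_def L_def)
      moreover have "m i \<in> {0,1}" for i
      proof (cases "i \<in> {1..N}")
        case True
        then have "i - 1 < length xs" using xs(1) by (auto simp: L_def)
        then have "xs ! (i - 1) \<in> set xs" by simp
        then show ?thesis using True xs by (auto simp: f'_def L_def)
      next
        case False then show ?thesis using xs(2) by (auto simp: f'_def)
      qed
      moreover have "m i = 0" if "i \<notin> {1..N}" for i using that xs(2) by (auto simp: f'_def)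
      ultimately show "m \<in> S1 n q" by (simp add: S1_def N_def[symmetric])
    qed
  qed
  have "(\<Sum>m\<in>S1 n q. pim n q m) = (\<Sum>m\<in>S1 n q. g (h m))" by (simp add: pim_eq)
  also have "\<dots> = (\<Sum>xs\<in>L N q. g xs)" by (rule sum.reindex_bij_betw[OF bij])
  also have "\<dots> = 1 / (fact (n - 2*q) * fact q * 2 ^ q)" using sumL qN by simp
  finally show ?thesis .
qed

end
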